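(* Let $m\ge1$ and let $H_{2m}$ be as in the context with $\zeta=1$, i.e. $h(w,w')=1-4ww'$. Then for all $w_1,\ldots,w_{2m}$ at which the expression is defined, \[ H_{2m}(w_1,\ldots,w_{2m})=2^{m(m-1)} . \]
   Context: For a parameter $\zeta$, $h(w,w')=1-(3+\zeta^2)ww'+(1-\zeta^2)ww'(w+w')$ and \[ H_{2m}(w_1,\ldots,w_{2m})=\frac{\prod_{i=1}^m\prod_{j=m+1}^{2m}h(w_i,w_j)}{\prod_{1\le i<j\le m}(w_i-w_j)\prod_{m+1\le i<j\le 2m}(w_i-w_j)}\ \det_{1\le i\le m,\ m+1\le j\le 2m}\frac{1}{h(w_i,w_j)}. \] *)

theory Defs
  imports Complex_Main "Jordan_Normal_Form.Determinant"
begin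

definition h_fun :: "complex \<Rightarrow> complex \<Rightarrow> complex \<Rightarrow> complex" where
  "h_fun \<zeta> w w' = 1 - (3 + \<zeta>^2) * w * w' + (1 - \<zeta>^2) * w * w' * (w + w')"

definition H_fun :: "complex \<Rightarrow> nat \<Rightarrow> (nat \<Rightarrow> complex) \<Rightarrow> complex" where
  "H_fun \<zeta> m w =
     (\<Prod>i\<in>{1..m}. \<Prod>j\<in>{m+1..2*m}. h_fun \<zeta> (w i) (w j))
     / ((\<Prod>i\<in>{1..m}. \<Prod>j\<in>{i+1..m}. (w i - w j))
        * (\<Prod>i\<in>{m+1..2*m}. \<Prod>j\<in>{i+1..2*m}. (w i - w j)))
     * det (mat m m (\<lambda>(i, j). 1 / h_fun \<zeta> (w (i + 1)) (w (m + j + 1))))"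

end

theory Submission
  imports Defs
begin

definition Dg :: "nat \<Rightarrow> (nat \<Rightarrow> 'a::comm_ring_1) \<Rightarrow> 'a mat" where
  "Dg n f = mat n n (\<lambda>(i,j). if i = j then f i else 0)"

lemma Dg_carrier[simp]: "Dg n f \<in> carrier_mat n n" by (simp add: Dg_def)

lemma det_Dg: "det (Dg n f) = (\<Prod>i<n. f i)"
proof -
  have "det (Dg n f) = prod_list (diag_mat (Dg n f))"
    by (rule det_lower_triangular[of n]) (auto simp: Dg_def)
  also have "\<dots> = (\<Prod>i<n. f i)"
    by (simp add: prod_list_diag_prod Dg_def atLeast0LessThan)
  finally show ?thesis .
qed

lemma Dg_mult_left:
  assumes "A \<in> carrier_mat n m"
  shows "Dg n f * A = mat n m (\<lambda>(i,j). f i * A $$ (i,j))"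
proof (rule eq_matI)
  fix i j assume "i < dim_row (mat n m (\<lambda>(i,j). f i * A $$ (i,j)))" "j < dim_col (mat n m (\<lambda>(i,j). f i * A $$ (i,j)))"
  hence ij: "i < n" "j < m" by auto
  have "(Dg n f * A) $$ (i,j) = (\<Sum>k\<in>{0..<n}. (if i = k then f i else 0) * A $$ (k,j))"
    using ij assms by (simp add: Dg_def scalar_prod_def)
  also have "\<dots> = (\<Sum>k\<in>{0..<n}. if k = i then f i * A $$ (i,j) else 0)"
    by (rule sum.cong) auto
  also have "\<dots> = f i * A $$ (i,j)"
    using ij by simp
  finally show "(Dg n f * A) $$ (i,j) = mat n m (\<lambda>(i,j). f i * A $$ (i,j)) $$ (i,j)" using ij by simp
qed (use assms in \<open>auto simp: Dg_def\<close>)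

lemma Dg_mult_right:
  assumes "A \<in> carrier_mat n m"
  shows "A * Dg m f = mat n m (\<lambda>(i,j). A $$ (i,j) * f j)"
proof (rule eq_matI)
  fix i j assume "i < dim_row (mat n m (\<lambda>(i,j). A $$ (i,j) * f j))" "j < dim_col (mat n m (\<lambda>(i,j). A $$ (i,j) * f j))"
  hence ij: "i < n" "j < m" by auto
  have "(A * Dg m f) $$ (i,j) = (\<Sum>k\<in>{0..<m}. A $$ (i,k) * (if k = j then f k else 0))"
    using ij assms by (simp add: Dg_def scalar_prod_def)
  also have "\<dots> = (\<Sum>k\<in>{0..<m}. if k = j then A $$ (i,j) * f j else 0)"
    by (rule sum.cong) auto
  also have "\<dots> = A $$ (i,j) * f j"
    using ij by simp
  finally show "(A * Dg m f) $$ (i,j) = mat n m (\<lambda>(i,j). A $$ (i,j) * f j) $$ (i,j)" using ij by simp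
qed (use assms in \<open>auto simp: Dg_def\<close>)

lemma frac1:
  fixes a b y :: "'a::field"
  assumes "1 - a*y \<noteq> 0" "1 - b*y \<noteq> 0"
  shows "1/(1 - a*y) - 1/(1 - b*y) = (a - b)*y/(1 - a*y) * (1/(1 - b*y))"
proof -
  have "1/(1 - a*y) - 1/(1 - b*y) = ((1 - b*y) - (1 - a*y)) / ((1 - a*y)*(1 - b*y))"
    using assms by (simp add: diff_frac_eq)
  also have "(1 - b*y) - (1 - a*y) = (a - b)*y" by (simp add: algebra_simps)
  finally show ?thesis by simp
qed

lemma frac2:
  fixes a b u v :: "'a::field"
  assumes "1 - a*u \<noteq> 0" "1 - a*v \<noteq> 0"
  shows "(a - b)*u/(1 - a*u) - (a - b)*v/(1 - a*v) = (a - b)/(1 - a*v) * (1/(1 - a*u)) * (u - v)"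
proof -
  have "(a - b)*u/(1 - a*u) - (a - b)*v/(1 - a*v) = ((a - b)*u*(1 - a*v) - (a - b)*v*(1 - a*u)) / ((1 - a*u)*(1 - a*v))"
    using assms by (simp add: diff_frac_eq)
  also have "(a - b)*u*(1 - a*v) - (a - b)*v*(1 - a*u) = (a - b)*(u - v)" by (simp add: algebra_simps)
  finally show ?thesis by simp
qed

definition Cm :: "nat \<Rightarrow> (nat \<Rightarrow> 'a::field) \<Rightarrow> (nat \<Rightarrow> 'a) \<Rightarrow> 'a mat" where
  "Cm n x y = mat n n (\<lambda>(i,j). 1 / (1 - x i * y j))"

lemma cauchy_step:
  fixes x y :: "nat \<Rightarrow> 'a::field"
  assumes nz: "\<And>i j. i < Suc k \<Longrightarrow> j < Suc k \<Longrightarrow> 1 - x i * y j \<noteq> 0"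
  shows "det (Cm (Suc k) x y) = (\<Prod>j<Suc k. 1 / (1 - x 0 * y j))
      * (\<Prod>i<k. (x (Suc i) - x 0) / (1 - x (Suc i) * y 0))
      * (\<Prod>j<k. y (Suc j) - y 0) * det (Cm k (\<lambda>i. x (Suc i)) (\<lambda>j. y (Suc j)))"
proof -
  let ?n = "Suc k"
  define M where "M = Cm ?n x y"
  define P :: "'a mat" where "P = mat ?n ?n (\<lambda>(i,j). (if i = j then 1 else 0) - (if j = 0 \<and> i \<noteq> 0 then 1 else 0))"
  define Q :: "'a mat" where "Q = mat ?n ?n (\<lambda>(i,j). (if i = j then 1 else 0) - (if i = 0 \<and> j \<noteq> 0 then 1 else 0))"
  define N :: "'a mat" where "N = mat ?n ?n (\<lambda>(i,j). if i = 0 then 1 else (x i - x 0) * y j / (1 - x i * y j))"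
  define a where "a = (\<lambda>j. 1 / (1 - x 0 * y j))"
  define c where "c = (\<lambda>i. (x (Suc i) - x 0) / (1 - x (Suc i) * y 0))"
  define d where "d = (\<lambda>j. y (Suc j) - y 0)"
  define M' where "M' = Cm k (\<lambda>i. x (Suc i)) (\<lambda>j. y (Suc j))"
  have Mc: "M \<in> carrier_mat ?n ?n" by (simp add: M_def Cm_def)
  have Pc: "P \<in> carrier_mat ?n ?n" by (simp add: P_def)
  have Qc: "Q \<in> carrier_mat ?n ?n" by (simp add: Q_def)
  have Nc: "N \<in> carrier_mat ?n ?n" by (simp add: N_def)
  have M'c: "M' \<in> carrier_mat k k" by (simp add: M'_def Cm_def)
  have detP: "det P = 1"
  proof -
    have "det P = prod_list (diag_mat P)"
      by (rule det_lower_triangular[OF _ Pc]) (auto simp: P_def)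
    also have "\<dots> = 1" by (auto simp: prod_list_diag_prod P_def intro!: prod.neutral)
    finally show ?thesis .
  qed
  have detQ: "det Q = 1"
  proof -
    have "det Q = prod_list (diag_mat Q)"
      by (rule det_upper_triangular[OF _ Qc]) (auto simp: Q_def upper_triangular_def)
    also have "\<dots> = 1" by (auto simp: prod_list_diag_prod Q_def intro!: prod.neutral)
    finally show ?thesis .
  qed
  have PM: "P * M = N * Dg ?n a"
  proof -
    have "P * M = mat ?n ?n (\<lambda>(i,j). M $$ (i,j) - (if i \<noteq> 0 then M $$ (0,j) else 0))"
    proof (rule eq_matI)
      fix i j assume ij': "i < dim_row (mat ?n ?n (\<lambda>(i,j). M $$ (i,j) - (if i \<noteq> 0 then M $$ (0,j) else 0)))"
        "j < dim_col (mat ?n ?n (\<lambda>(i,j). M $$ (i,j) - (if i \<noteq> 0 then M $$ (0,j) else 0)))"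
      hence ij: "i < ?n" "j < ?n" by auto
      have "(P * M) $$ (i,j) = (\<Sum>l\<in>{0..<?n}. ((if i = l then 1 else 0) - (if l = 0 \<and> i \<noteq> 0 then 1 else 0)) * M $$ (l,j))"
        using ij Mc Pc by (simp add: P_def scalar_prod_def)
      also have "\<dots> = (\<Sum>l\<in>{0..<?n}. (if l = i then M $$ (i,j) else 0) - (if l = 0 then (if i \<noteq> 0 then M $$ (0,j) else 0) else 0))"
        by (rule sum.cong) (auto simp: algebra_simps)
      also have "\<dots> = M $$ (i,j) - (if i \<noteq> 0 then M $$ (0,j) else 0)"
        using ij by (simp add: sum_subtractf)
      finally show "(P * M) $$ (i,j) = mat ?n ?n (\<lambda>(i,j). M $$ (i,j) - (if i \<noteq> 0 then M $$ (0,j) else 0)) $$ (i,j)"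
        using ij by simp
    qed (use Pc Mc in auto)
    also have "\<dots> = mat ?n ?n (\<lambda>(i,j). N $$ (i,j) * a j)"
    proof (rule eq_matI)
      fix i j assume "i < dim_row (mat ?n ?n (\<lambda>(i,j). N $$ (i,j) * a j))" "j < dim_col (mat ?n ?n (\<lambda>(i,j). N $$ (i,j) * a j))"
      hence ij: "i < ?n" "j < ?n" by auto
      have h1: "1 - x i * y j \<noteq> 0" "1 - x 0 * y j \<noteq> 0" using nz ij by auto
      show "mat ?n ?n (\<lambda>(i,j). M $$ (i,j) - (if i \<noteq> 0 then M $$ (0,j) else 0)) $$ (i,j) = mat ?n ?n (\<lambda>(i,j). N $$ (i,j) * a j) $$ (i,j)"
        using ij h1 by (simp add: M_def N_def Cm_def a_def frac1)
    qed auto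
    also have "\<dots> = N * Dg ?n a" by (rule Dg_mult_right[OF Nc, symmetric])
    finally show ?thesis .
  qed
  define B where "B = N * Q"
  have Bc: "B \<in> carrier_mat ?n ?n" using Nc Qc by (simp add: B_def)
  have Bent: "B $$ (i,j) = N $$ (i,j) - (if j \<noteq> 0 then N $$ (i,0) else 0)" if ij: "i < ?n" "j < ?n" for i j
  proof -
    have "B $$ (i,j) = (\<Sum>l\<in>{0..<?n}. N $$ (i,l) * ((if l = j then 1 else 0) - (if l = 0 \<and> j \<noteq> 0 then 1 else 0)))"
      using ij Nc Qc by (simp add: B_def Q_def scalar_prod_def)
    also have "\<dots> = (\<Sum>l\<in>{0..<?n}. (if l = j then N $$ (i,j) else 0) - (if l = 0 then (if j \<noteq> 0 then N $$ (i,0) else 0) else 0))"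
      by (rule sum.cong) (auto simp: algebra_simps)
    also have "\<dots> = N $$ (i,j) - (if j \<noteq> 0 then N $$ (i,0) else 0)"
      using ij by (simp add: sum_subtractf)
    finally show ?thesis .
  qed
  have detB: "det B = det (mat_delete B 0 0)"
  proof -
    have "det B = (\<Sum>j<?n. B $$ (0,j) * cofactor B 0 j)"
      by (rule laplace_expansion_row[OF Bc]) simp
    also have "\<dots> = (\<Sum>j<?n. if j = 0 then cofactor B 0 0 else 0)"
      by (rule sum.cong) (auto simp: Bent N_def)
    also have "\<dots> = cofactor B 0 0" by simp
    finally show ?thesis by (simp add: cofactor_def)
  qed
  have Bdel: "mat_delete B 0 0 = Dg k c * M' * Dg k d"
  proof -
    have "mat_delete B 0 0 = mat k k (\<lambda>(i,j). c i * M' $$ (i,j) * d j)"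
    proof (rule eq_matI)
      fix i j assume "i < dim_row (mat k k (\<lambda>(i,j). c i * M' $$ (i,j) * d j))" "j < dim_col (mat k k (\<lambda>(i,j). c i * M' $$ (i,j) * d j))"
      hence ij: "i < k" "j < k" by auto
      have h1: "1 - x (Suc i) * y (Suc j) \<noteq> 0" "1 - x (Suc i) * y 0 \<noteq> 0" using nz ij by auto
      have "mat_delete B 0 0 $$ (i,j) = B $$ (Suc i, Suc j)"
        using ij Bc by (simp add: mat_delete_def)
      also have "\<dots> = c i * M' $$ (i,j) * d j"
        using ij h1 by (simp add: Bent N_def c_def d_def M'_def Cm_def frac2)
      finally show "mat_delete B 0 0 $$ (i,j) = mat k k (\<lambda>(i,j). c i * M' $$ (i,j) * d j) $$ (i,j)"
        using ij by simp
    qed (use Bc in auto)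
    also have "\<dots> = Dg k c * M' * Dg k d"
    proof -
      have e1: "Dg k c * M' = mat k k (\<lambda>(i,j). c i * M' $$ (i,j))" by (rule Dg_mult_left[OF M'c])
      have "mat k k (\<lambda>(i,j). c i * M' $$ (i,j)) * Dg k d = mat k k (\<lambda>(i,j). mat k k (\<lambda>(i,j). c i * M' $$ (i,j)) $$ (i,j) * d j)"
        by (rule Dg_mult_right) simp
      also have "\<dots> = mat k k (\<lambda>(i,j). c i * M' $$ (i,j) * d j)"
        by (rule eq_matI) auto
      finally show ?thesis using e1 by simp
    qed
    finally show ?thesis .
  qed
  have "det M = det (P * M)" using det_mult[OF Pc Mc] detP by simp
  also have "\<dots> = det N * (\<Prod>j<?n. a j)"
    using det_mult[OF Nc Dg_carrier, of a] PM by (simp add: det_Dg)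
  also have "det N = det B"
    using det_mult[OF Nc Qc] detQ by (simp add: B_def)
  also have "\<dots> = (\<Prod>i<k. c i) * det M' * (\<Prod>j<k. d j)"
    unfolding detB Bdel
  proof -
    have c1: "Dg k c * M' \<in> carrier_mat k k" using M'c by (metis Dg_carrier mult_carrier_mat)
    show "det (Dg k c * M' * Dg k d) = (\<Prod>i<k. c i) * det M' * (\<Prod>j<k. d j)"
      using det_mult[OF c1 Dg_carrier, of d] det_mult[OF Dg_carrier M'c, of c] by (simp add: det_Dg)
  qed
  finally show ?thesis by (simp add: M_def M'_def a_def c_def d_def ac_simps)
qed

lemma cauchy:
  fixes x y :: "nat \<Rightarrow> 'a::field"
  assumes "\<And>i j. i < n \<Longrightarrow> j < n \<Longrightarrow> 1 - x i * y j \<noteq> 0"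
  shows "det (Cm n x y) = (\<Prod>i<n. \<Prod>j<n. 1 / (1 - x i * y j))
            * (\<Prod>i<n. \<Prod>j\<in>{Suc i..<n}. (x i - x j) * (y i - y j))"
  using assms
proof (induction n arbitrary: x y)
  case 0
  have "Cm 0 x y \<in> carrier_mat 0 0" by (simp add: Cm_def)
  then show ?case by simp
next
  case (Suc k)
  let ?x = "\<lambda>i. x (Suc i)" and ?y = "\<lambda>j. y (Suc j)"
  have IH: "det (Cm k ?x ?y) = (\<Prod>i<k. \<Prod>j<k. 1 / (1 - ?x i * ?y j))
            * (\<Prod>i<k. \<Prod>j\<in>{Suc i..<k}. (?x i - ?x j) * (?y i - ?y j))"
    by (rule Suc.IH) (use Suc.prems in auto)
  have cd: "(\<Prod>i<k. (x (Suc i) - x 0) / (1 - x (Suc i) * y 0)) * (\<Prod>j<k. y (Suc j) - y 0)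
     = (\<Prod>i<k. 1 / (1 - x (Suc i) * y 0)) * (\<Prod>j<k. (x 0 - x (Suc j)) * (y 0 - y (Suc j)))"
  proof -
    have "(\<Prod>i<k. (x (Suc i) - x 0) / (1 - x (Suc i) * y 0)) * (\<Prod>j<k. y (Suc j) - y 0)
       = (\<Prod>i<k. (x (Suc i) - x 0) / (1 - x (Suc i) * y 0) * (y (Suc i) - y 0))"
      by (rule prod.distrib[symmetric])
    also have "\<dots> = (\<Prod>i<k. 1 / (1 - x (Suc i) * y 0) * ((x 0 - x (Suc i)) * (y 0 - y (Suc i))))"
    proof (rule prod.cong)
      fix i
      have "\<And>a b c d B::'a. (a - b)/B*(c - d) = 1/B*((b-a)*(d-c))"
        by (simp add: divide_inverse algebra_simps)
      then show "(x (Suc i) - x 0) / (1 - x (Suc i) * y 0) * (y (Suc i) - y 0) = 1 / (1 - x (Suc i) * y 0) * ((x 0 - x (Suc i)) * (y 0 - y (Suc i)))" .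
    qed simp
    also have "\<dots> = (\<Prod>i<k. 1 / (1 - x (Suc i) * y 0)) * (\<Prod>j<k. (x 0 - x (Suc j)) * (y 0 - y (Suc j)))"
      by (rule prod.distrib)
    finally show ?thesis .
  qed
  have p1: "(\<Prod>i<Suc k. \<Prod>j<Suc k. 1 / (1 - x i * y j)) = (\<Prod>j<Suc k. 1 / (1 - x 0 * y j))
      * ((\<Prod>i<k. 1 / (1 - x (Suc i) * y 0)) * (\<Prod>i<k. \<Prod>j<k. 1 / (1 - ?x i * ?y j)))"
  proof -
    have "(\<Prod>i<Suc k. \<Prod>j<Suc k. 1 / (1 - x i * y j)) = (\<Prod>j<Suc k. 1 / (1 - x 0 * y j))
      * (\<Prod>i<k. \<Prod>j<Suc k. 1 / (1 - x (Suc i) * y j))"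
      by (rule prod.lessThan_Suc_shift)
    also have "(\<Prod>i<k. \<Prod>j<Suc k. 1 / (1 - x (Suc i) * y j))
       = (\<Prod>i<k. 1 / (1 - x (Suc i) * y 0) * (\<Prod>j<k. 1 / (1 - ?x i * ?y j)))"
      by (rule prod.cong[OF refl], rule prod.lessThan_Suc_shift)
    also have "\<dots> = (\<Prod>i<k. 1 / (1 - x (Suc i) * y 0)) * (\<Prod>i<k. \<Prod>j<k. 1 / (1 - ?x i * ?y j))"
      by (rule prod.distrib)
    finally show ?thesis .
  qed
  have p2: "(\<Prod>i<Suc k. \<Prod>j\<in>{Suc i..<Suc k}. (x i - x j) * (y i - y j))
      = (\<Prod>j<k. (x 0 - x (Suc j)) * (y 0 - y (Suc j)))
       * (\<Prod>i<k. \<Prod>j\<in>{Suc i..<k}. (?x i - ?x j) * (?y i - ?y j))"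
  proof -
    have "(\<Prod>i<Suc k. \<Prod>j\<in>{Suc i..<Suc k}. (x i - x j) * (y i - y j))
      = (\<Prod>j\<in>{Suc 0..<Suc k}. (x 0 - x j) * (y 0 - y j))
       * (\<Prod>i<k. \<Prod>j\<in>{Suc (Suc i)..<Suc k}. (x (Suc i) - x j) * (y (Suc i) - y j))"
      by (rule prod.lessThan_Suc_shift)
    also have "(\<Prod>j\<in>{Suc 0..<Suc k}. (x 0 - x j) * (y 0 - y j)) = (\<Prod>j<k. (x 0 - x (Suc j)) * (y 0 - y (Suc j)))"
      unfolding prod.shift_bounds_Suc_ivl atLeast0LessThan ..
    also have "(\<Prod>i<k. \<Prod>j\<in>{Suc (Suc i)..<Suc k}. (x (Suc i) - x j) * (y (Suc i) - y j))
       = (\<Prod>i<k. \<Prod>j\<in>{Suc i..<k}. (?x i - ?x j) * (?y i - ?y j))"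
      unfolding prod.shift_bounds_Suc_ivl ..
    finally show ?thesis .
  qed
  have step: "det (Cm (Suc k) x y) = (\<Prod>j<Suc k. 1 / (1 - x 0 * y j))
      * (\<Prod>i<k. (x (Suc i) - x 0) / (1 - x (Suc i) * y 0))
      * (\<Prod>j<k. y (Suc j) - y 0) * det (Cm k ?x ?y)"
    by (rule cauchy_step) (rule Suc.prems; simp)
  show ?case
    unfolding step IH p1 p2 mult.assoc[symmetric]
    unfolding mult.assoc[of "\<Prod>j<Suc k. 1 / (1 - x 0 * y j)" "\<Prod>i<k. (x (Suc i) - x 0) / (1 - x (Suc i) * y 0)"] cd
    by (simp only: ac_simps)
qed

lemma four_pow: "(\<Prod>i<m. \<Prod>j\<in>{Suc i..<m}. (4::complex)) = 2 ^ (m * (m - 1))"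
proof -
  have "(\<Prod>i<m. \<Prod>j\<in>{Suc i..<m}. (4::complex)) = (\<Prod>i<m. 4 ^ (m - Suc i))"
    by simp
  also have "\<dots> = 2 ^ (m * (m - 1))"
  proof (induction m)
    case 0 then show ?case by simp
  next
    case (Suc m)
    have "(\<Prod>i<Suc m. (4::complex) ^ (Suc m - Suc i)) = 4 ^ m * (\<Prod>i<m. 4 ^ (m - Suc i))"
      by (simp add: prod.lessThan_Suc_shift del: prod.lessThan_Suc)
    also have "\<dots> = 2 ^ (2 * m) * 2 ^ (m * (m - 1))" using Suc.IH by (simp add: power_mult)
    also have "\<dots> = 2 ^ (Suc m * (Suc m - 1))"
    proof -
      have "2 * m + m * (m - 1) = Suc m * (Suc m - 1)" by (cases m) auto
      then show ?thesis by (metis power_add)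
    qed
    finally show ?case .
  qed
  finally show ?thesis .
qed

theorem mainTheorem9:
  fixes m :: nat and w :: "nat \<Rightarrow> complex"
  assumes "m \<ge> 1"
    and "\<And>i j. 1 \<le> i \<Longrightarrow> i < j \<Longrightarrow> j \<le> m \<Longrightarrow> w i \<noteq> w j"
    and "\<And>i j. m + 1 \<le> i \<Longrightarrow> i < j \<Longrightarrow> j \<le> 2 * m \<Longrightarrow> w i \<noteq> w j"
    and "\<And>i j. 1 \<le> i \<Longrightarrow> i \<le> m \<Longrightarrow> m + 1 \<le> j \<Longrightarrow> j \<le> 2 * m \<Longrightarrow> h_fun 1 (w i) (w j) \<noteq> 0"
  shows "H_fun 1 m w = 2 ^ (m * (m - 1))"
proof -
  define u where "u = (\<lambda>i. w (Suc i))"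
  define v where "v = (\<lambda>j. w (m + j + 1))"
  define x where "x = (\<lambda>i. 4 * u i)"
  have hf: "h_fun 1 a b = 1 - 4 * a * b" for a b by (simp add: h_fun_def)
  have nz: "1 - x i * v j \<noteq> 0" if "i < m" "j < m" for i j
    using assms(4)[of "Suc i" "m + j + 1"] that by (simp add: hf x_def u_def v_def mult.assoc)
  have matEq: "mat m m (\<lambda>(i, j). 1 / h_fun 1 (w (i + 1)) (w (m + j + 1))) = Cm m x v"
    by (rule eq_matI) (auto simp: Cm_def hf x_def u_def v_def mult.assoc)
  have detEq: "det (Cm m x v) = (\<Prod>i<m. \<Prod>j<m. 1 / (1 - x i * v j))
            * (\<Prod>i<m. \<Prod>j\<in>{Suc i..<m}. (x i - x j) * (v i - v j))"
    by (rule cauchy) (rule nz)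
  define Hp where "Hp = (\<Prod>i<m. \<Prod>j<m. 1 - x i * v j)"
  have A: "(\<Prod>i\<in>{1..m}. \<Prod>j\<in>{m+1..2*m}. h_fun 1 (w i) (w j)) = Hp"
  proof -
    have "(\<Prod>i\<in>{1..m}. \<Prod>j\<in>{m+1..2*m}. h_fun 1 (w i) (w j)) = (\<Prod>i<m. \<Prod>j\<in>{m+1..2*m}. h_fun 1 (w (Suc i)) (w j))"
      using prod.atLeast1_atMost_eq by simp
    also have "\<dots> = (\<Prod>i<m. \<Prod>j<m. h_fun 1 (w (Suc i)) (w (m + j + 1)))"
      by (rule prod.cong[OF refl], rule prod.reindex_bij_witness[where i="\<lambda>j. m + j + 1" and j="\<lambda>j. j - m - 1"]) auto
    finally show ?thesis by (simp add: Hp_def hf x_def u_def v_def mult.assoc)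
  qed
  define V1 where "V1 = (\<Prod>i<m. \<Prod>j\<in>{Suc i..<m}. u i - u j)"
  define V2 where "V2 = (\<Prod>i<m. \<Prod>j\<in>{Suc i..<m}. v i - v j)"
  have B: "(\<Prod>i\<in>{1..m}. \<Prod>j\<in>{i+1..m}. (w i - w j)) = V1"
  proof -
    have "(\<Prod>i\<in>{1..m}. \<Prod>j\<in>{i+1..m}. (w i - w j)) = (\<Prod>i<m. \<Prod>j\<in>{Suc i + 1..m}. (w (Suc i) - w j))"
      using prod.atLeast1_atMost_eq by simp
    also have "\<dots> = V1" unfolding V1_def u_def
      by (rule prod.cong[OF refl], rule prod.reindex_bij_witness[where i="\<lambda>j. j + 1" and j="\<lambda>j. j - 1"]) auto
    finally show ?thesis .
  qed
  have C: "(\<Prod>i\<in>{m+1..2*m}. \<Prod>j\<in>{i+1..2*m}. (w i - w j)) = V2"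
  proof -
    have "(\<Prod>i\<in>{m+1..2*m}. \<Prod>j\<in>{i+1..2*m}. (w i - w j)) = (\<Prod>i<m. \<Prod>j\<in>{m+i+2..2*m}. (w (m+i+1) - w j))"
      by (rule prod.reindex_bij_witness[where i="\<lambda>j. m + j + 1" and j="\<lambda>j. j - m - 1"]) auto
    also have "\<dots> = V2" unfolding V2_def v_def
      by (rule prod.cong[OF refl], rule prod.reindex_bij_witness[where i="\<lambda>j. m + j + 1" and j="\<lambda>j. j - m - 1"]) auto
    finally show ?thesis .
  qed
  have V1nz: "V1 \<noteq> 0" unfolding V1_def u_def
    using assms(2) by (auto simp: prod_zero_iff)
  have V2nz: "V2 \<noteq> 0" unfolding V2_def v_def
    using assms(3) by (auto simp: prod_zero_iff)
  have Hpnz: "Hp \<noteq> 0" unfolding Hp_def using nz by (auto simp: prod_zero_iff)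
  have inv: "(\<Prod>i<m. \<Prod>j<m. 1 / (1 - x i * v j)) = 1 / Hp"
    unfolding Hp_def by (simp add: prod_dividef)
  have D: "(\<Prod>i<m. \<Prod>j\<in>{Suc i..<m}. (x i - x j) * (v i - v j)) = 2 ^ (m * (m - 1)) * V1 * V2"
  proof -
    have "(\<Prod>i<m. \<Prod>j\<in>{Suc i..<m}. (x i - x j) * (v i - v j))
       = (\<Prod>i<m. \<Prod>j\<in>{Suc i..<m}. 4 * ((u i - u j) * (v i - v j)))"
      by (simp add: x_def algebra_simps)
    also have "\<dots> = (\<Prod>i<m. \<Prod>j\<in>{Suc i..<m}. (4::complex)) * V1 * V2"
      by (simp add: V1_def V2_def prod.distrib mult.assoc)
    finally show ?thesis by (simp only: four_pow)
  qed
  show ?thesis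
    unfolding H_fun_def A B C matEq detEq inv D
    using V1nz V2nz Hpnz by (simp add: field_simps)
qed

end
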